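(* Let $\mathcal{X}=\{1,\dots,n\}$, let $\pi$ be a strictly positive probability distribution on $\mathcal{X}$, let $P$ be a $\pi$-reversible transition matrix, let $G$ be the Gibbs kernel induced by a partition $\mathcal{X}=\bigsqcup_{i=1}^k\mathcal{O}_i$, and for $\alpha\in[0,1]$ let $A_\alpha=\alpha P+(1-\alpha)G$. Assume the partition is such that $\operatorname{Tr}(\overline{P})=0$. Then $\operatorname*{argmin}_{\alpha\in[0,1]}\|A_\alpha-\Pi\|_{F,\pi}^2=\{\alpha^*\}$ with $\alpha^*=\dfrac{k}{\operatorname{Tr}(P^2)+k}$.
   Context: $\pi$-reversible means $\pi(x)P(x,y)=\pi(y)P(y,x)$. Gibbs kernel: $G(x,y)=\pi(y)/\pi(\mathcal{O}(x))$ if $y\in\mathcal{O}(x)$ and $0$ otherwise, $\mathcal{O}(x)$ the block containing $x$, $\pi(\mathcal{O})=\sum_{z\in\mathcal{O}}\pi(z)$. Projection chain: $\overline{P}(i,j)=\frac{1}{\pi(\mathcal{O}_i)}\sum_{x\in\mathcal{O}_i,\,y\in\mathcal{O}_j}\pi(x)P(x,y)$. $\Pi$ is the matrix with every row equal to $\pi$; $\|M\|_{F,\pi}^2=\operatorname{Tr}(M^*M)$ with $M^*(x,y)=\pi(y)M(y,x)/\pi(x)$. *)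

theory Defs
  imports Complex_Main "HOL-Library.Disjoint_Sets"
begin

text \<open>State space: a finite type 'x (standing for {1..n}). Matrices are functions 'x => 'x => real.\<close>

definition prob_dist :: "('x::finite \<Rightarrow> real) \<Rightarrow> bool" where
  "prob_dist \<pi> \<longleftrightarrow> (\<forall>x. \<pi> x > 0) \<and> (\<Sum>x\<in>UNIV. \<pi> x) = 1"

definition transition_matrix :: "('x::finite \<Rightarrow> 'x \<Rightarrow> real) \<Rightarrow> bool" where
  "transition_matrix P \<longleftrightarrow> (\<forall>x y. P x y \<ge> 0) \<and> (\<forall>x. (\<Sum>y\<in>UNIV. P x y) = 1)"

definition reversible :: "('x \<Rightarrow> real) \<Rightarrow> ('x \<Rightarrow> 'x \<Rightarrow> real) \<Rightarrow> bool" where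
  "reversible \<pi> P \<longleftrightarrow> (\<forall>x y. \<pi> x * P x y = \<pi> y * P y x)"

definition block_of :: "'x set set \<Rightarrow> 'x \<Rightarrow> 'x set" where
  "block_of \<O> x = (THE B. B \<in> \<O> \<and> x \<in> B)"

definition mass :: "('x \<Rightarrow> real) \<Rightarrow> 'x set \<Rightarrow> real" where
  "mass \<pi> B = (\<Sum>z\<in>B. \<pi> z)"

definition gibbs_kernel :: "('x \<Rightarrow> real) \<Rightarrow> 'x set set \<Rightarrow> 'x \<Rightarrow> 'x \<Rightarrow> real" where
  "gibbs_kernel \<pi> \<O> x y =
     (if y \<in> block_of \<O> x then \<pi> y / mass \<pi> (block_of \<O> x) else 0)"

definition projection_chain ::
  "('x \<Rightarrow> real) \<Rightarrow> ('x \<Rightarrow> 'x \<Rightarrow> real) \<Rightarrow> 'x set \<Rightarrow> 'x set \<Rightarrow> real" where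
  "projection_chain \<pi> P Oi Oj = (1 / mass \<pi> Oi) * (\<Sum>x\<in>Oi. \<Sum>y\<in>Oj. \<pi> x * P x y)"

definition trace :: "('x::finite \<Rightarrow> 'x \<Rightarrow> real) \<Rightarrow> real" where
  "trace M = (\<Sum>x\<in>UNIV. M x x)"

definition mat_mult :: "('x::finite \<Rightarrow> 'x \<Rightarrow> real) \<Rightarrow> ('x \<Rightarrow> 'x \<Rightarrow> real) \<Rightarrow> 'x \<Rightarrow> 'x \<Rightarrow> real" where
  "mat_mult M N x y = (\<Sum>z\<in>UNIV. M x z * N z y)"

definition adjoint :: "('x \<Rightarrow> real) \<Rightarrow> ('x \<Rightarrow> 'x \<Rightarrow> real) \<Rightarrow> 'x \<Rightarrow> 'x \<Rightarrow> real" where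
  "adjoint \<pi> M x y = \<pi> y * M y x / \<pi> x"

definition frob_sq :: "('x::finite \<Rightarrow> real) \<Rightarrow> ('x \<Rightarrow> 'x \<Rightarrow> real) \<Rightarrow> real" where
  "frob_sq \<pi> M = trace (mat_mult (adjoint \<pi> M) M)"

definition Pi_mat :: "('x \<Rightarrow> real) \<Rightarrow> 'x \<Rightarrow> 'x \<Rightarrow> real" where
  "Pi_mat \<pi> x y = \<pi> y"

end

theory Submission
  imports Defs
begin

lemma block_props:
  assumes "partition_on (UNIV::'x set) \<O>"
  shows "block_of \<O> x \<in> \<O> \<and> x \<in> block_of \<O> x"
proof -
  have "x \<in> \<Union>\<O>" using partition_onD1[OF assms] by (metis UNIV_I)
  then obtain B where B: "B \<in> \<O>" "x \<in> B" by (rule UnionE)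
  have u: "C = B" if "C \<in> \<O>" "x \<in> C" for C
  proof (rule ccontr)
    assume "C \<noteq> B"
    then have "C \<inter> B = {}" using disjointD[OF partition_onD2[OF assms] that(1) B(1)] by simp
    then show False using that(2) B(2) by blast
  qed
  have "block_of \<O> x = B" unfolding block_of_def
  proof (rule the_equality)
    show "B \<in> \<O> \<and> x \<in> B" using B by (rule conjI)
    show "C = B" if "C \<in> \<O> \<and> x \<in> C" for C using that u by blast
  qed
  thus ?thesis using B by simp
qed

lemma block_eq:
  assumes "partition_on (UNIV::'x set) \<O>" "B \<in> \<O>" "x \<in> B"
  shows "block_of \<O> x = B"
proof (rule ccontr)
  assume "block_of \<O> x \<noteq> B"
  then have "block_of \<O> x \<inter> B = {}"
    using disjointD[OF partition_onD2[OF assms(1)] _ assms(2)] block_props[OF assms(1), of x] by blast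
  then show False using block_props[OF assms(1), of x] assms(3) by blast
qed

lemma sum_part:
  assumes "partition_on (UNIV::'x::finite set) \<O>"
  shows "(\<Sum>x\<in>UNIV. f x) = (\<Sum>B\<in>\<O>. \<Sum>x\<in>B. f x)"
proof -
  have "(\<Sum>x\<in>UNIV. f x) = sum f (\<Union>\<O>)" using partition_onD1[OF assms] by simp
  also have "\<dots> = (\<Sum>B\<in>\<O>. \<Sum>x\<in>B. f x)"
    by (subst sum.Union_disjoint) (use partition_onD2[OF assms] in \<open>auto simp: disjoint_def\<close>)
  finally show ?thesis .
qed

definition T2 :: "('x::finite \<Rightarrow> 'x \<Rightarrow> real) \<Rightarrow> ('x \<Rightarrow> 'x \<Rightarrow> real) \<Rightarrow> real" where
  "T2 A B = (\<Sum>x\<in>UNIV. \<Sum>z\<in>UNIV. A x z * B z x)"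

lemma T2_sym: "T2 A B = T2 B A"
  unfolding T2_def by (subst sum.swap) (simp add: mult.commute)

lemma frob_rev:
  assumes "\<And>x. \<pi> x > 0" "\<And>x y. \<pi> x * M x y = \<pi> y * M y x"
  shows "frob_sq \<pi> M = T2 M M"
proof -
  have "adjoint \<pi> M x z = M x z" for x z
    using assms(1)[of x] assms(2)[of x z] unfolding adjoint_def
    by (simp add: field_simps)
  thus ?thesis unfolding frob_sq_def trace_def mat_mult_def T2_def by simp
qed

lemma gibbs_rev:
  assumes "partition_on (UNIV::'x set) \<O>"
  shows "\<pi> x * gibbs_kernel \<pi> \<O> x y = \<pi> y * gibbs_kernel \<pi> \<O> y x"
proof (cases "y \<in> block_of \<O> x")
  case True
  then have "block_of \<O> y = block_of \<O> x" using block_eq[OF assms] block_props[OF assms] by blast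
  then show ?thesis using True block_props[OF assms, of x] unfolding gibbs_kernel_def by simp
next
  case False
  then have "x \<notin> block_of \<O> y" using block_eq[OF assms] block_props[OF assms] by metis
  then show ?thesis using False unfolding gibbs_kernel_def by simp
qed


lemma T2_add_left: "T2 (\<lambda>x z. A x z + B x z) C = T2 A C + T2 B C"
  unfolding T2_def by (simp add: distrib_right sum.distrib)
lemma T2_diff_left: "T2 (\<lambda>x z. A x z - B x z) C = T2 A C - T2 B C"
  unfolding T2_def by (simp add: left_diff_distrib sum_subtractf)
lemma T2_scale_left: "T2 (\<lambda>x z. c * A x z) C = c * T2 A C"
  unfolding T2_def by (simp add: sum_distrib_left mult.assoc)
lemma T2_add_right: "T2 C (\<lambda>x z. A x z + B x z) = T2 C A + T2 C B"
  unfolding T2_def by (simp add: distrib_left sum.distrib)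
lemma T2_diff_right: "T2 C (\<lambda>x z. A x z - B x z) = T2 C A - T2 C B"
  unfolding T2_def by (simp add: right_diff_distrib sum_subtractf)
lemma T2_scale_right: "T2 C (\<lambda>x z. c * A x z) = c * T2 C A"
  unfolding T2_def by (simp add: sum_distrib_left mult.assoc mult.left_commute)

lemma mass_pos:
  assumes "partition_on (UNIV::'x::finite set) \<O>" "B \<in> \<O>" "\<And>x. \<pi> x > 0"
  shows "mass \<pi> B > 0"
  unfolding mass_def using partition_onD3[OF assms(1)] assms(2,3)
  by (intro sum_pos) auto

lemma gibbs_in:
  assumes "partition_on (UNIV::'x::finite set) \<O>" "B \<in> \<O>" "x \<in> B"
  shows "gibbs_kernel \<pi> \<O> x z = (if z \<in> B then \<pi> z / mass \<pi> B else 0)"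
  unfolding gibbs_kernel_def using block_eq[OF assms] by simp

lemma sum_ind: "(\<Sum>z\<in>(UNIV::'x::finite set). (if z \<in> B then g z else 0)) = sum g B"
  by (simp add: sum.inter_restrict[symmetric])

lemma gibbs_row:
  assumes "partition_on (UNIV::'x::finite set) \<O>" "\<And>x. \<pi> x > 0"
  shows "(\<Sum>z\<in>UNIV. gibbs_kernel \<pi> \<O> x z) = 1"
proof -
  define B where "B = block_of \<O> x"
  have B: "B \<in> \<O>" "x \<in> B" using block_props[OF assms(1)] B_def by auto
  have "(\<Sum>z\<in>UNIV. gibbs_kernel \<pi> \<O> x z) = (\<Sum>z\<in>B. \<pi> z / mass \<pi> B)"
    using gibbs_in[OF assms(1) B] sum_ind by simp
  also have "\<dots> = mass \<pi> B / mass \<pi> B" by (simp only: mass_def sum_divide_distrib)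
  also have "\<dots> = 1" using mass_pos[OF assms(1) B(1), of \<pi>] assms(2) by simp
  finally show ?thesis .
qed

lemma T2_GP:
  assumes "partition_on (UNIV::'x::finite set) \<O>" "\<And>x. \<pi> x > 0"
  shows "T2 (gibbs_kernel \<pi> \<O>) P = (\<Sum>B\<in>\<O>. projection_chain \<pi> P B B)"
proof -
  have "T2 (gibbs_kernel \<pi> \<O>) P = (\<Sum>B\<in>\<O>. \<Sum>x\<in>B. \<Sum>z\<in>UNIV. gibbs_kernel \<pi> \<O> x z * P z x)"
    unfolding T2_def by (rule sum_part[OF assms(1)])
  also have "\<dots> = (\<Sum>B\<in>\<O>. projection_chain \<pi> P B B)"
  proof (rule sum.cong[OF refl])
    fix B assume B: "B \<in> \<O>"
    have "(\<Sum>x\<in>B. \<Sum>z\<in>UNIV. gibbs_kernel \<pi> \<O> x z * P z x)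
        = (\<Sum>x\<in>B. \<Sum>z\<in>B. \<pi> z * P z x / mass \<pi> B)"
    proof (rule sum.cong[OF refl])
      fix x assume x: "x \<in> B"
      show "(\<Sum>z\<in>UNIV. gibbs_kernel \<pi> \<O> x z * P z x) = (\<Sum>z\<in>B. \<pi> z * P z x / mass \<pi> B)"
      proof -
        have "(\<Sum>z\<in>UNIV. gibbs_kernel \<pi> \<O> x z * P z x) = (\<Sum>z\<in>UNIV. if z \<in> B then \<pi> z * P z x / mass \<pi> B else 0)"
          by (rule sum.cong[OF refl]) (simp add: gibbs_in[OF assms(1) B x])
        then show ?thesis using sum_ind[of B "\<lambda>z. \<pi> z * P z x / mass \<pi> B"] by simp
      qed
    qed
    also have "\<dots> = (1 / mass \<pi> B) * (\<Sum>z\<in>B. \<Sum>x\<in>B. \<pi> z * P z x)"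
      by (subst sum.swap) (simp add: sum_distrib_left)
    finally show "(\<Sum>x\<in>B. \<Sum>z\<in>UNIV. gibbs_kernel \<pi> \<O> x z * P z x) = projection_chain \<pi> P B B"
      unfolding projection_chain_def .
  qed
  finally show ?thesis .
qed

lemma T2_GG:
  assumes "partition_on (UNIV::'x::finite set) \<O>" "\<And>x. \<pi> x > 0"
  shows "T2 (gibbs_kernel \<pi> \<O>) (gibbs_kernel \<pi> \<O>) = real (card \<O>)"
proof -
  have "T2 (gibbs_kernel \<pi> \<O>) (gibbs_kernel \<pi> \<O>)
     = (\<Sum>B\<in>\<O>. \<Sum>x\<in>B. \<Sum>z\<in>UNIV. gibbs_kernel \<pi> \<O> x z * gibbs_kernel \<pi> \<O> z x)"
    unfolding T2_def by (rule sum_part[OF assms(1)])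
  also have "\<dots> = (\<Sum>B\<in>\<O>. 1)"
  proof (rule sum.cong[OF refl])
    fix B assume B: "B \<in> \<O>"
    have mp: "mass \<pi> B > 0" using mass_pos[OF assms(1) B assms(2)] .
    have "(\<Sum>x\<in>B. \<Sum>z\<in>UNIV. gibbs_kernel \<pi> \<O> x z * gibbs_kernel \<pi> \<O> z x)
        = (\<Sum>x\<in>B. \<pi> x / mass \<pi> B)"
    proof (rule sum.cong[OF refl])
      fix x assume x: "x \<in> B"
      have "(\<Sum>z\<in>UNIV. gibbs_kernel \<pi> \<O> x z * gibbs_kernel \<pi> \<O> z x)
          = (\<Sum>z\<in>B. \<pi> z / mass \<pi> B * (\<pi> x / mass \<pi> B))"
      proof -
        have "(\<Sum>z\<in>UNIV. gibbs_kernel \<pi> \<O> x z * gibbs_kernel \<pi> \<O> z x) = (\<Sum>z\<in>UNIV. if z \<in> B then \<pi> z / mass \<pi> B * (\<pi> x / mass \<pi> B) else 0)"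
          by (rule sum.cong[OF refl]) (use x in \<open>auto simp: gibbs_in[OF assms(1) B x] gibbs_in[OF assms(1) B]\<close>)
        then show ?thesis using sum_ind[of B "\<lambda>z. \<pi> z / mass \<pi> B * (\<pi> x / mass \<pi> B)"] by simp
      qed
      also have "\<dots> = \<pi> x / mass \<pi> B"
      proof -
        have "(\<Sum>z\<in>B. \<pi> z / mass \<pi> B * (\<pi> x / mass \<pi> B)) = (mass \<pi> B / mass \<pi> B) * (\<pi> x / mass \<pi> B)"
          by (simp only: mass_def sum_divide_distrib sum_distrib_right)
        then show ?thesis using mp by simp
      qed
      finally show "(\<Sum>z\<in>UNIV. gibbs_kernel \<pi> \<O> x z * gibbs_kernel \<pi> \<O> z x) = \<pi> x / mass \<pi> B" .
    qed
    also have "\<dots> = mass \<pi> B / mass \<pi> B" by (simp only: mass_def sum_divide_distrib)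
    also have "\<dots> = 1" using mp by simp
    finally show "(\<Sum>x\<in>B. \<Sum>z\<in>UNIV. gibbs_kernel \<pi> \<O> x z * gibbs_kernel \<pi> \<O> z x) = 1" .
  qed
  also have "\<dots> = real (card \<O>)" by simp
  finally show ?thesis .
qed

lemma T2_XPi:
  assumes "\<And>x. (\<Sum>z\<in>UNIV. A x z) = 1" "prob_dist \<pi>"
  shows "T2 A (Pi_mat \<pi>) = 1"
proof -
  have "T2 A (Pi_mat \<pi>) = (\<Sum>x\<in>UNIV. \<pi> x * (\<Sum>z\<in>UNIV. A x z))"
    unfolding T2_def Pi_mat_def by (simp add: sum_distrib_left mult.commute)
  also have "\<dots> = 1" using assms unfolding prob_dist_def by simp
  finally show ?thesis .
qed


theorem proposition4p7:
  fixes \<pi> :: "'x::finite \<Rightarrow> real" and P :: "'x \<Rightarrow> 'x \<Rightarrow> real" and \<O> :: "'x set set"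
  assumes "prob_dist \<pi>"
    and "transition_matrix P"
    and "reversible \<pi> P"
    and "partition_on UNIV \<O>"
    and "(\<Sum>B\<in>\<O>. projection_chain \<pi> P B B) = 0"
  shows "{\<alpha>\<in>{0..1::real}. \<forall>\<beta>\<in>{0..1}.
            frob_sq \<pi> (\<lambda>x y. \<alpha> * P x y + (1 - \<alpha>) * gibbs_kernel \<pi> \<O> x y - Pi_mat \<pi> x y)
         \<le> frob_sq \<pi> (\<lambda>x y. \<beta> * P x y + (1 - \<beta>) * gibbs_kernel \<pi> \<O> x y - Pi_mat \<pi> x y)}
       = {real (card \<O>) / (trace (mat_mult P P) + real (card \<O>))}"
proof -
  have pos: "\<And>x. \<pi> x > 0" using assms(1) unfolding prob_dist_def by auto
  define G where "G = gibbs_kernel \<pi> \<O>"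
  define f where "f a = frob_sq \<pi> (\<lambda>x y. a * P x y + (1 - a) * gibbs_kernel \<pi> \<O> x y - Pi_mat \<pi> x y)" for a
  define s where "s = trace (mat_mult P P)"
  define k where "k = real (card \<O>)"
  define c where "c = T2 G G - 2 * T2 G (Pi_mat \<pi>) + T2 (Pi_mat \<pi>) (Pi_mat \<pi>)"
  have sP: "T2 P P = s" unfolding s_def T2_def trace_def mat_mult_def ..
  have GP: "T2 G P = 0" using T2_GP[OF assms(4) pos, where P=P] assms(5) unfolding G_def by simp
  have PG: "T2 P G = 0" using GP T2_sym by metis
  have GG: "T2 G G = k" unfolding G_def k_def by (rule T2_GG[OF assms(4) pos])
  have PPi: "T2 P (Pi_mat \<pi>) = 1"
    by (rule T2_XPi[OF _ assms(1)]) (use assms(2) in \<open>simp add: transition_matrix_def\<close>)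
  have GPi: "T2 G (Pi_mat \<pi>) = 1"
    unfolding G_def by (rule T2_XPi[OF gibbs_row[OF assms(4) pos] assms(1)])
  have PiP: "T2 (Pi_mat \<pi>) P = 1" using PPi T2_sym by metis
  have PiG: "T2 (Pi_mat \<pi>) G = 1" using GPi T2_sym by metis
  have fexp: "f a = (s + k) * a\<^sup>2 - 2 * k * a + c" for a
  proof -
    have rv: "\<pi> x * (a * P x y + (1 - a) * G x y - Pi_mat \<pi> x y)
            = \<pi> y * (a * P y x + (1 - a) * G y x - Pi_mat \<pi> y x)" for x y
    proof -
      have "\<pi> x * (a * P x y + (1 - a) * G x y - Pi_mat \<pi> x y)
          = a * (\<pi> x * P x y) + (1 - a) * (\<pi> x * G x y) - \<pi> x * \<pi> y"
        unfolding Pi_mat_def by (simp add: algebra_simps)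
      also have "\<dots> = a * (\<pi> y * P y x) + (1 - a) * (\<pi> y * G y x) - \<pi> y * \<pi> x"
        using assms(3) gibbs_rev[OF assms(4)] unfolding reversible_def G_def by simp
      also have "\<dots> = \<pi> y * (a * P y x + (1 - a) * G y x - Pi_mat \<pi> y x)"
        unfolding Pi_mat_def by (simp add: algebra_simps)
      finally show ?thesis .
    qed
    have "f a = T2 (\<lambda>x y. a * P x y + (1 - a) * G x y - Pi_mat \<pi> x y)
                   (\<lambda>x y. a * P x y + (1 - a) * G x y - Pi_mat \<pi> x y)"
      unfolding f_def G_def[symmetric] by (rule frob_rev[OF pos rv])
    also have "\<dots> = a * (a * T2 P P + (1 - a) * T2 P G - T2 P (Pi_mat \<pi>))
        + (1 - a) * (a * T2 G P + (1 - a) * T2 G G - T2 G (Pi_mat \<pi>))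
        - (a * T2 (Pi_mat \<pi>) P + (1 - a) * T2 (Pi_mat \<pi>) G - T2 (Pi_mat \<pi>) (Pi_mat \<pi>))"
      by (simp only: T2_diff_left T2_add_left T2_scale_left T2_diff_right T2_add_right T2_scale_right)
    also have "\<dots> = (s + k) * a\<^sup>2 - 2 * k * a + c"
      unfolding sP PG GP GG PPi GPi PiP PiG c_def by (simp add: algebra_simps power2_eq_square)
    finally show ?thesis .
  qed
  have s0: "s \<ge> 0" unfolding s_def trace_def mat_mult_def
    using assms(2) unfolding transition_matrix_def by (intro sum_nonneg) auto
  have finO: "finite \<O>" by (rule finite_elements[OF finite_UNIV assms(4)])
  have "\<O> \<noteq> {}" using partition_onD1[OF assms(4)] by auto
  then have k1: "k \<ge> 1" unfolding k_def using finO by (simp add: Suc_le_eq card_gt_0_iff)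
  define a0 where "a0 = k / (s + k)"
  have spk: "s + k > 0" using s0 k1 by simp
  have a01: "a0 \<in> {0..1}" unfolding a0_def using s0 k1 spk by (auto simp: field_simps)
  have diff: "f b - f a0 = (s + k) * (b - a0)\<^sup>2" for b
  proof -
    have ha: "(s + k) * a0 = k" unfolding a0_def using spk by simp
    have "f b - f a0 = (s + k) * b\<^sup>2 - 2 * k * b - (s + k) * a0\<^sup>2 + 2 * k * a0"
      unfolding fexp by simp
    also have "\<dots> = (s + k) * b\<^sup>2 - 2 * ((s + k) * a0) * b - (s + k) * a0\<^sup>2 + 2 * ((s + k) * a0) * a0"
      unfolding ha ..
    also have "\<dots> = (s + k) * (b - a0)\<^sup>2" by (simp add: power2_eq_square algebra_simps)
    finally show ?thesis .
  qed
  have "{\<alpha>\<in>{0..1::real}. \<forall>\<beta>\<in>{0..1}. f \<alpha> \<le> f \<beta>} = {a0}"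
  proof
    show "{a0} \<subseteq> {\<alpha>\<in>{0..1::real}. \<forall>\<beta>\<in>{0..1}. f \<alpha> \<le> f \<beta>}"
    proof -
      have "f a0 \<le> f b" for b using diff[of b] spk
        by (metis diff_ge_0_iff_ge zero_le_power2 mult_nonneg_nonneg less_imp_le)
      then show ?thesis using a01 by auto
    qed
    show "{\<alpha>\<in>{0..1::real}. \<forall>\<beta>\<in>{0..1}. f \<alpha> \<le> f \<beta>} \<subseteq> {a0}"
    proof
      fix \<alpha> assume "\<alpha> \<in> {\<alpha>\<in>{0..1::real}. \<forall>\<beta>\<in>{0..1}. f \<alpha> \<le> f \<beta>}"
      then have "f \<alpha> \<le> f a0" using a01 by auto
      then have "(s + k) * (\<alpha> - a0)\<^sup>2 \<le> 0" using diff[of \<alpha>] by simp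
      then have "(\<alpha> - a0)\<^sup>2 \<le> 0" using spk by (simp add: mult_le_0_iff)
      then show "\<alpha> \<in> {a0}" by simp
    qed
  qed
  then show ?thesis unfolding f_def a0_def s_def k_def .
qed

end
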